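(* For each $n$, let $G=(V,E)$ be the complete graph on $V=\{1,\ldots,n\}$ and let $b(\mathbf x)=\sum_{ij\in E}a_{ij}x_ix_j$, where the coefficients $a_{ij}$ are chosen independently and uniformly at random from $\{1,-1\}$. For $\mathbf x=(1/2,1/2,\ldots,1/2)$ we have \[\lim_{n\to\infty}\Pr\left[\operatorname{mcgap}[b](\mathbf x)\geqslant\frac{\sqrt n}{4}\operatorname{chgap}[b](\mathbf x)\right]=1.\]
   Context: Let $G=(V,E)$ be an undirected graph with $V=\{1,\ldots,n\}$; write $ij$ for the edge $\{i,j\}$. A bilinear function is $b:[0,1]^n\to\mathbb R$, $b(\mathbf x)=\sum_{ij\in E}a_{ij}x_ix_j$ with real coefficients $a_{ij}$. Its graph is $B=\{(\mathbf x,z)\in[0,1]^n\times\mathbb R: z=b(\mathbf x)\}$, and $\operatorname{conv}(B)$ is its convex hull. The McCormick polytopes are $P=\{(\mathbf x,\mathbf y)\in[0,1]^n\times[0,1]^{|E|}: y_{ij}\le x_i,\ y_{ij}\le x_j,\ y_{ij}\ge x_i+x_j-1\ \forall ij\in E\}$ and $Q=\{(\mathbf x,z)\in[0,1]^n\times\mathbb R:\exists\mathbf y\in[0,1]^{|E|}\text{ with }(\mathbf x,\mathbf y)\in P,\ z=\sum_{ij\in E}a_{ij}y_{ij}\}$. Define for $\mathbf x\in[0,1]^n$: $\operatorname{cav}[b](\mathbf x)=\max\{z:(\mathbf x,z)\in\operatorname{conv}(B)\}$, $\operatorname{vex}[b](\mathbf x)=\min\{z:(\mathbf x,z)\in\operatorname{conv}(B)\}$,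 $\operatorname{mcu}[b](\mathbf x)=\max\{z:(\mathbf x,z)\in Q\}$, $\operatorname{mcl}[b](\mathbf x)=\min\{z:(\mathbf x,z)\in Q\}$, the convex hull gap $\operatorname{chgap}[b]=\operatorname{cav}[b]-\operatorname{vex}[b]$ and the McCormick gap $\operatorname{mcgap}[b]=\operatorname{mcu}[b]-\operatorname{mcl}[b]$. *)

theory Defs
  imports "HOL-Analysis.Analysis"
begin

text \<open>Points of [0,1]^n are represented as functions nat => real, supported on {1..n}.
  Edges ij are represented as pairs (i,j) with i < j.\<close>

definition cube :: "nat \<Rightarrow> (nat \<Rightarrow> real) set" where
  "cube n = {x. (\<forall>i\<in>{1..n}. 0 \<le> x i \<and> x i \<le> 1) \<and> (\<forall>i. i \<notin> {1..n} \<longrightarrow> x i = 0)}"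

definition complete_edges :: "nat \<Rightarrow> (nat \<times> nat) set" where
  "complete_edges n = {(i,j). 1 \<le> i \<and> i < j \<and> j \<le> n}"

definition bil :: "(nat \<times> nat) set \<Rightarrow> (nat \<times> nat \<Rightarrow> real) \<Rightarrow> (nat \<Rightarrow> real) \<Rightarrow> real" where
  "bil E a x = (\<Sum>(i,j)\<in>E. a (i,j) * x i * x j)"

definition graphB :: "nat \<Rightarrow> (nat \<times> nat) set \<Rightarrow> (nat \<times> nat \<Rightarrow> real) \<Rightarrow> ((nat \<Rightarrow> real) \<times> real) set" where
  "graphB n E a = {(x, bil E a x) | x. x \<in> cube n}"

definition convhull :: "((nat \<Rightarrow> real) \<times> real) set \<Rightarrow> ((nat \<Rightarrow> real) \<times> real) set" where
  "convhull S = {(x, z). \<exists>(k::nat) (c::nat \<Rightarrow> real) (p::nat \<Rightarrow> (nat \<Rightarrow> real) \<times> real).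
      (\<forall>l<k. 0 \<le> c l \<and> p l \<in> S) \<and> (\<Sum>l<k. c l) = 1 \<and>
      x = (\<lambda>t. \<Sum>l<k. c l * fst (p l) t) \<and> z = (\<Sum>l<k. c l * snd (p l))}"

definition cav :: "nat \<Rightarrow> (nat \<times> nat) set \<Rightarrow> (nat \<times> nat \<Rightarrow> real) \<Rightarrow> (nat \<Rightarrow> real) \<Rightarrow> real" where
  "cav n E a x = Sup {z. (x, z) \<in> convhull (graphB n E a)}"

definition vex :: "nat \<Rightarrow> (nat \<times> nat) set \<Rightarrow> (nat \<times> nat \<Rightarrow> real) \<Rightarrow> (nat \<Rightarrow> real) \<Rightarrow> real" where
  "vex n E a x = Inf {z. (x, z) \<in> convhull (graphB n E a)}"

definition mcP :: "nat \<Rightarrow> (nat \<times> nat) set \<Rightarrow> ((nat \<Rightarrow> real) \<times> (nat \<times> nat \<Rightarrow> real)) set" where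
  "mcP n E = {(x, y). x \<in> cube n \<and> (\<forall>e. e \<notin> E \<longrightarrow> y e = 0) \<and>
      (\<forall>(i,j)\<in>E. 0 \<le> y (i,j) \<and> y (i,j) \<le> 1 \<and> y (i,j) \<le> x i \<and> y (i,j) \<le> x j \<and> y (i,j) \<ge> x i + x j - 1)}"

definition mcQ :: "nat \<Rightarrow> (nat \<times> nat) set \<Rightarrow> (nat \<times> nat \<Rightarrow> real) \<Rightarrow> ((nat \<Rightarrow> real) \<times> real) set" where
  "mcQ n E a = {(x, z). x \<in> cube n \<and> (\<exists>y. (x, y) \<in> mcP n E \<and> z = (\<Sum>e\<in>E. a e * y e))}"

definition mcu :: "nat \<Rightarrow> (nat \<times> nat) set \<Rightarrow> (nat \<times> nat \<Rightarrow> real) \<Rightarrow> (nat \<Rightarrow> real) \<Rightarrow> real" where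
  "mcu n E a x = Sup {z. (x, z) \<in> mcQ n E a}"

definition mcl :: "nat \<Rightarrow> (nat \<times> nat) set \<Rightarrow> (nat \<times> nat \<Rightarrow> real) \<Rightarrow> (nat \<Rightarrow> real) \<Rightarrow> real" where
  "mcl n E a x = Inf {z. (x, z) \<in> mcQ n E a}"

definition chgap :: "nat \<Rightarrow> (nat \<times> nat) set \<Rightarrow> (nat \<times> nat \<Rightarrow> real) \<Rightarrow> (nat \<Rightarrow> real) \<Rightarrow> real" where
  "chgap n E a x = cav n E a x - vex n E a x"

definition mcgap :: "nat \<Rightarrow> (nat \<times> nat) set \<Rightarrow> (nat \<times> nat \<Rightarrow> real) \<Rightarrow> (nat \<Rightarrow> real) \<Rightarrow> real" where
  "mcgap n E a x = mcu n E a x - mcl n E a x"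

definition halfpt :: "nat \<Rightarrow> nat \<Rightarrow> real" where
  "halfpt n = (\<lambda>i. if i \<in> {1..n} then 1/2 else 0)"

text \<open>Uniformly random sign coefficients: the probability of an event is the
  fraction of sign assignments E -> {1,-1} satisfying it.\<close>
definition sign_prob :: "(nat \<times> nat) set \<Rightarrow> ((nat \<times> nat \<Rightarrow> real) \<Rightarrow> bool) \<Rightarrow> real" where
  "sign_prob E P = real (card {a \<in> E \<rightarrow>\<^sub>E {1, -1}. P a}) / real (card (E \<rightarrow>\<^sub>E ({1, -1} :: real set)))"

end

theory Submission
  imports Defs "HOL-Probability.Hoeffding"
begin


lemma bil_alt: "bil E a x = (\<Sum>e\<in>E. a e * x (fst e) * x (snd e))"
  unfolding bil_def by (simp add: case_prod_beta')

lemma edge_mem: "e \<in> complete_edges n \<Longrightarrow> fst e \<in> {1..n} \<and> snd e \<in> {1..n} \<and> fst e \<noteq> snd e"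
  by (auto simp: complete_edges_def)

lemma finite_edges: "finite (complete_edges n)"
proof -
  have "complete_edges n \<subseteq> {1..n} \<times> {1..n}" by (auto simp: complete_edges_def)
  thus ?thesis by (rule finite_subset) auto
qed

lemma edges_Suc: "complete_edges (Suc n) = complete_edges n \<union> (\<lambda>i. (i, Suc n)) ` {1..n}"
  by (auto simp: complete_edges_def)

lemma card_edges: "real (card (complete_edges n)) = real n * (real n - 1) / 2"
proof (induction n)
  case 0
  have "complete_edges 0 = {}" by (auto simp: complete_edges_def)
  thus ?case by simp
next
  case (Suc n)
  have d: "complete_edges n \<inter> (\<lambda>i. (i, Suc n)) ` {1..n} = {}" by (auto simp: complete_edges_def)
  have "card (complete_edges (Suc n)) = card (complete_edges n) + card ((\<lambda>i. (i, Suc n)) ` {1..n})"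
    unfolding edges_Suc by (rule card_Un_disjoint) (use d finite_edges in auto)
  also have "card ((\<lambda>i. (i, Suc n)) ` {1..n}) = n" by (subst card_image) (auto simp: inj_on_def)
  finally show ?case using Suc by (simp add: algebra_simps)
qed

lemma halfpt_cube: "halfpt n \<in> cube n"
  by (auto simp: halfpt_def cube_def)

lemma mcgap_half:
  assumes a: "a \<in> complete_edges n \<rightarrow>\<^sub>E {1, -1}"
  shows "mcgap n (complete_edges n) a (halfpt n) = real (card (complete_edges n)) / 2"
proof -
  define E where "E = complete_edges n"
  define h where "h = halfpt n"
  define Z where "Z = {z. (h, z) \<in> mcQ n E a}"
  define U where "U = (\<Sum>e\<in>E. (a e + 1) / 4)"
  define L where "L = (\<Sum>e\<in>E. (a e - 1) / 4)"
  have ae: "a e = 1 \<or> a e = -1" if "e \<in> E" for e using a that E_def by auto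
  have hE: "h (fst e) = 1/2 \<and> h (snd e) = 1/2" if "e \<in> E" for e
    using edge_mem[of e n] that unfolding E_def h_def halfpt_def by auto
  have Zb: "L \<le> z \<and> z \<le> U" if "z \<in> Z" for z
  proof -
    from that obtain y where y: "(h, y) \<in> mcP n E" and z: "z = (\<Sum>e\<in>E. a e * y e)"
      unfolding Z_def mcQ_def by auto
    have yb: "0 \<le> y e \<and> y e \<le> 1/2" if "e \<in> E" for e
      using y that hE[OF that] unfolding mcP_def by (cases e) fastforce
    have "z \<le> U" unfolding z U_def
      by (rule sum_mono) (use ae yb in fastforce)
    moreover have "L \<le> z" unfolding z L_def
      by (rule sum_mono) (use ae yb in fastforce)
    ultimately show ?thesis by simp
  qed
  have yin: "(h, y) \<in> mcP n E" if "\<And>e. e \<notin> E \<Longrightarrow> y e = 0" "\<And>e. e \<in> E \<Longrightarrow> 0 \<le> y e \<and> y e \<le> 1/2" for y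
    unfolding mcP_def using that hE halfpt_cube unfolding h_def by fastforce
  have UZ: "U \<in> Z"
  proof -
    define y where "y = (\<lambda>e. if e \<in> E then (a e + 1) / 4 else 0)"
    have "(h, y) \<in> mcP n E" by (rule yin) (use ae in \<open>fastforce simp: y_def\<close>)+
    moreover have "U = (\<Sum>e\<in>E. a e * y e)" unfolding U_def y_def
      by (rule sum.cong) (use ae in fastforce)+
    ultimately show ?thesis unfolding Z_def mcQ_def using halfpt_cube h_def by auto
  qed
  have LZ: "L \<in> Z"
  proof -
    define y where "y = (\<lambda>e. if e \<in> E then (1 - a e) / 4 else 0)"
    have "(h, y) \<in> mcP n E" by (rule yin) (use ae in \<open>fastforce simp: y_def\<close>)+
    moreover have "L = (\<Sum>e\<in>E. a e * y e)" unfolding L_def y_def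
      by (rule sum.cong) (use ae in fastforce)+
    ultimately show ?thesis unfolding Z_def mcQ_def using halfpt_cube h_def by auto
  qed
  have "mcu n E a h = U" unfolding mcu_def Z_def[symmetric]
    by (rule cSup_eq_maximum) (use UZ Zb in auto)
  moreover have "mcl n E a h = L" unfolding mcl_def Z_def[symmetric]
    by (rule cInf_eq_minimum) (use LZ Zb in auto)
  moreover have "U - L = real (card E) / 2"
    unfolding U_def L_def by (simp add: sum_subtractf[symmetric] diff_divide_distrib[symmetric])
  ultimately show ?thesis unfolding mcgap_def E_def h_def by simp
qed



lemma bil_affine:
  assumes "\<And>e. e \<in> E \<Longrightarrow> fst e \<noteq> snd e"
  shows "bil E a (v(k:=t)) = bil E a (v(k:=0)) + t * (bil E a (v(k:=1)) - bil E a (v(k:=0)))"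
proof -
  have "bil E a (v(k:=t)) = (\<Sum>e\<in>E. a e * (v(k:=0)) (fst e) * (v(k:=0)) (snd e) +
      t * (a e * (v(k:=1)) (fst e) * (v(k:=1)) (snd e) - a e * (v(k:=0)) (fst e) * (v(k:=0)) (snd e)))"
    unfolding bil_alt
  proof (rule sum.cong[OF refl])
    fix e assume "e \<in> E"
    with assms have "fst e \<noteq> snd e" by auto
    thus "a e * (v(k:=t)) (fst e) * (v(k:=t)) (snd e) = a e * (v(k:=0)) (fst e) * (v(k:=0)) (snd e) +
      t * (a e * (v(k:=1)) (fst e) * (v(k:=1)) (snd e) - a e * (v(k:=0)) (fst e) * (v(k:=0)) (snd e))"
      by (cases "fst e = k"; cases "snd e = k") (auto simp: algebra_simps)
  qed
  also have "\<dots> = bil E a (v(k:=0)) + t * (bil E a (v(k:=1)) - bil E a (v(k:=0)))"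
    unfolding bil_alt by (simp add: sum.distrib flip: sum_distrib_left sum_subtractf)
  finally show ?thesis .
qed

lemma convex_abs_bound:
  fixes p q x T :: real
  assumes "\<bar>p\<bar> \<le> T" "\<bar>q\<bar> \<le> T" "\<bar>x\<bar> \<le> 1"
  shows "\<bar>(1 + x) / 2 * p + (1 - x) / 2 * q\<bar> \<le> T"
proof -
  have "\<bar>(1 + x) / 2 * p\<bar> \<le> (1 + x) / 2 * T"
    using assms by (simp add: abs_mult mult_left_mono)
  moreover have "\<bar>(1 - x) / 2 * q\<bar> \<le> (1 - x) / 2 * T"
    using assms by (simp add: abs_mult mult_left_mono)
  moreover have "(1 + x) / 2 * T + (1 - x) / 2 * T = T" by (simp add: field_simps)
  ultimately show ?thesis using abs_triangle_ineq[of "(1 + x) / 2 * p" "(1 - x) / 2 * q"] by linarith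
qed

lemma box_base:
  assumes B: "\<forall>s\<in>{1..n} \<rightarrow>\<^sub>E {1,-1::real}. \<bar>bil (complete_edges n) a s\<bar> \<le> T"
    and K: "{i\<in>{1..n}. v i \<noteq> 1 \<and> v i \<noteq> -1} = {}"
  shows "\<bar>bil (complete_edges n) a v\<bar> \<le> T"
proof -
  let ?s = "restrict v {1..n}"
  have "?s \<in> {1..n} \<rightarrow>\<^sub>E {1,-1}" using K by auto
  moreover have "bil (complete_edges n) a v = bil (complete_edges n) a ?s"
    unfolding bil_alt by (rule sum.cong) (auto dest: edge_mem)
  ultimately show ?thesis using B by auto
qed

lemma box_ind:
  assumes B: "\<forall>s\<in>{1..n} \<rightarrow>\<^sub>E {1,-1::real}. \<bar>bil (complete_edges n) a s\<bar> \<le> T"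
  shows "\<forall>v. (\<forall>i\<in>{1..n}. \<bar>v i\<bar> \<le> 1) \<longrightarrow> card {i\<in>{1..n}. v i \<noteq> 1 \<and> v i \<noteq> -1} \<le> m
     \<longrightarrow> \<bar>bil (complete_edges n) a v\<bar> \<le> T"
proof (induction m)
  case 0
  show ?case using box_base[OF B] by auto
next
  case (Suc m)
  show ?case
  proof (intro allI impI)
    fix v :: "nat \<Rightarrow> real"
    assume vb: "\<forall>i\<in>{1..n}. \<bar>v i\<bar> \<le> 1" and c: "card {i\<in>{1..n}. v i \<noteq> 1 \<and> v i \<noteq> -1} \<le> Suc m"
    define K where "K = {i\<in>{1..n}. v i \<noteq> 1 \<and> v i \<noteq> -1}"
    show "\<bar>bil (complete_edges n) a v\<bar> \<le> T"
    proof (cases "K = {}")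
      case True thus ?thesis using box_base[OF B] K_def by auto
    next
      case False
      then obtain k where k: "k \<in> K" by blast
      have fK: "finite K" unfolding K_def by auto
      have upd: "\<bar>bil (complete_edges n) a (v(k:=t))\<bar> \<le> T" if t: "t = 1 \<or> t = -1" for t
      proof -
        have "{i\<in>{1..n}. (v(k:=t)) i \<noteq> 1 \<and> (v(k:=t)) i \<noteq> -1} = K - {k}"
          using t k unfolding K_def by auto
        moreover have "card (K - {k}) \<le> m" using c k fK unfolding K_def[symmetric]
          by (simp add: card_Diff_singleton)
        moreover have "\<forall>i\<in>{1..n}. \<bar>(v(k:=t)) i\<bar> \<le> 1" using vb t by auto
        ultimately show ?thesis using Suc.IH by auto
      qed
      have dist: "\<And>e. e \<in> complete_edges n \<Longrightarrow> fst e \<noteq> snd e" using edge_mem by blast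
      define b0 where "b0 = bil (complete_edges n) a (v(k:=0))"
      define d where "d = bil (complete_edges n) a (v(k:=1)) - b0"
      have aff: "bil (complete_edges n) a (v(k:=t)) = b0 + t * d" for t
        unfolding b0_def d_def by (rule bil_affine[OF dist])
      have "v = v(k := v k)" by simp
      hence "bil (complete_edges n) a v = b0 + v k * d" using aff by metis
      also have "\<dots> = (1 + v k) / 2 * (b0 + 1 * d) + (1 - v k) / 2 * (b0 + (-1) * d)"
        by (simp add: field_simps)
      finally have eq: "bil (complete_edges n) a v = (1 + v k) / 2 * (b0 + 1 * d) + (1 - v k) / 2 * (b0 + (-1) * d)" .
      have "\<bar>v k\<bar> \<le> 1" using vb k K_def by auto
      thus ?thesis unfolding eq
        by (rule convex_abs_bound[rotated 2]) (use upd[of 1] upd[of "-1"] aff in auto)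
    qed
  qed
qed

lemma box_bound:
  assumes B: "\<forall>s\<in>{1..n} \<rightarrow>\<^sub>E {1,-1::real}. \<bar>bil (complete_edges n) a s\<bar> \<le> T"
    and v: "\<forall>i\<in>{1..n}. \<bar>v i\<bar> \<le> 1"
  shows "\<bar>bil (complete_edges n) a v\<bar> \<le> T"
  using box_ind[OF B] v by blast



lemma bil_decomp:
  "bil E a x = bil E a (\<lambda>t. 2 * x t - 1) / 4 + (\<Sum>e\<in>E. a e * ((x (fst e) + x (snd e)) / 2 - 1/4))"
proof -
  have "bil E a x = (\<Sum>e\<in>E. a e * (2 * x (fst e) - 1) * (2 * x (snd e) - 1) / 4 + a e * ((x (fst e) + x (snd e)) / 2 - 1/4))"
    unfolding bil_alt by (rule sum.cong) (auto simp: field_simps)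
  also have "\<dots> = bil E a (\<lambda>t. 2 * x t - 1) / 4 + (\<Sum>e\<in>E. a e * ((x (fst e) + x (snd e)) / 2 - 1/4))"
    unfolding bil_alt sum.distrib sum_divide_distrib ..
  finally show ?thesis .
qed

lemma chgap_bound:
  assumes B: "\<forall>s\<in>{1..n} \<rightarrow>\<^sub>E {1,-1::real}. \<bar>bil (complete_edges n) a s\<bar> \<le> T"
  shows "chgap n (complete_edges n) a (halfpt n) \<le> T / 2"
proof -
  define E where "E = complete_edges n"
  define h where "h = halfpt n"
  define Z where "Z = {z. (h, z) \<in> convhull (graphB n E a)}"
  define Sa where "Sa = (\<Sum>e\<in>E. a e)"
  have mem: "Sa/4 - T/4 \<le> z \<and> z \<le> Sa/4 + T/4" if "z \<in> Z" for z
  proof -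
    have "\<exists>(k::nat) c p. (\<forall>l<k. 0 \<le> c l \<and> p l \<in> graphB n E a) \<and> (\<Sum>l<k. c l) = 1 \<and>
       h = (\<lambda>t. \<Sum>l<k. c l * fst (p l) t) \<and> z = (\<Sum>l<k. c l * snd (p l))"
      using that unfolding Z_def convhull_def by simp
    then obtain k :: nat and c p where c: "\<forall>l<k. 0 \<le> c l \<and> p l \<in> graphB n E a"
      and c1: "(\<Sum>l<k. c l) = 1" and hx: "h = (\<lambda>t. \<Sum>l<k. c l * fst (p l) t)"
      and z: "z = (\<Sum>l<k. c l * snd (p l))"
      by blast
    define X where "X = (\<lambda>l. fst (p l))"
    have Xc: "X l \<in> cube n" and sp: "snd (p l) = bil E a (X l)" if "l < k" for l
      using c that unfolding graphB_def X_def by auto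
    have hX: "(\<Sum>l<k. c l * X l i) = 1/2" if "i \<in> {1..n}" for i
      using fun_cong[OF hx, of i] that unfolding X_def h_def halfpt_def by auto
    have z2: "z = (\<Sum>l<k. c l * (bil E a (\<lambda>t. 2 * X l t - 1) / 4)) +
       (\<Sum>l<k. c l * (\<Sum>e\<in>E. a e * ((X l (fst e) + X l (snd e)) / 2 - 1/4)))"
      unfolding z by (simp add: sp bil_decomp[of E a "X _"] distrib_left sum.distrib)
    have "(\<Sum>l<k. c l * (\<Sum>e\<in>E. a e * ((X l (fst e) + X l (snd e)) / 2 - 1/4)))
        = (\<Sum>e\<in>E. a e * ((\<Sum>l<k. c l * X l (fst e)) / 2 + (\<Sum>l<k. c l * X l (snd e)) / 2 - (\<Sum>l<k. c l) / 4))"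
    proof -
      have "(\<Sum>l<k. c l * (\<Sum>e\<in>E. a e * ((X l (fst e) + X l (snd e)) / 2 - 1/4)))
          = (\<Sum>l<k. \<Sum>e\<in>E. a e * (c l * X l (fst e) / 2 + c l * X l (snd e) / 2 - c l / 4))"
        unfolding sum_distrib_left by (rule sum.cong[OF refl], rule sum.cong[OF refl]) (simp add: algebra_simps)
      also have "\<dots> = (\<Sum>e\<in>E. \<Sum>l<k. a e * (c l * X l (fst e) / 2 + c l * X l (snd e) / 2 - c l / 4))"
        by (rule sum.swap)
      also have "\<dots> = (\<Sum>e\<in>E. a e * ((\<Sum>l<k. c l * X l (fst e)) / 2 + (\<Sum>l<k. c l * X l (snd e)) / 2 - (\<Sum>l<k. c l) / 4))"
        by (simp only: sum_distrib_left[symmetric] sum.distrib sum_subtractf sum_divide_distrib)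
      finally show ?thesis .
    qed
    also have "\<dots> = (\<Sum>e\<in>E. a e * (1/4))"
    proof (rule sum.cong[OF refl])
      fix e assume "e \<in> E"
      hence "fst e \<in> {1..n}" "snd e \<in> {1..n}" using edge_mem E_def by auto
      thus "a e * ((\<Sum>l<k. c l * X l (fst e)) / 2 + (\<Sum>l<k. c l * X l (snd e)) / 2 - (\<Sum>l<k. c l) / 4) = a e * (1/4)"
        using hX[of "fst e"] hX[of "snd e"] c1 by simp
    qed
    finally have t2: "(\<Sum>l<k. c l * (\<Sum>e\<in>E. a e * ((X l (fst e) + X l (snd e)) / 2 - 1/4))) = Sa / 4"
      unfolding Sa_def by (simp add: sum_divide_distrib)
    have bl: "\<bar>c l * (bil E a (\<lambda>t. 2 * X l t - 1) / 4)\<bar> \<le> c l * (T / 4)" if "l < k" for l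
    proof -
      have "\<bar>bil E a (\<lambda>t. 2 * X l t - 1)\<bar> \<le> T" unfolding E_def
        by (rule box_bound[OF B]) (use Xc[OF that] in \<open>auto simp: cube_def\<close>)
      thus ?thesis using c that by (simp add: abs_mult mult_left_mono)
    qed
    have "\<bar>\<Sum>l<k. c l * (bil E a (\<lambda>t. 2 * X l t - 1) / 4)\<bar> \<le> (\<Sum>l<k. c l * (T / 4))"
      by (rule order_trans[OF sum_abs sum_mono]) (use bl in auto)
    also have "\<dots> = (\<Sum>l<k. c l) * (T / 4)" by (rule sum_distrib_right[symmetric])
    also have "\<dots> = T / 4" using c1 by simp
    finally show ?thesis unfolding z2 t2 by linarith
  qed
  have ne: "bil E a h \<in> Z"
  proof -
    have "(h, bil E a h) \<in> graphB n E a" unfolding graphB_def h_def using halfpt_cube by auto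
    thus ?thesis unfolding Z_def convhull_def
      by (auto intro!: exI[of _ "Suc 0"] exI[of _ "\<lambda>_. 1"] exI[of _ "\<lambda>_. (h, bil E a h)"])
  qed
  have "cav n E a h \<le> Sa/4 + T/4" unfolding cav_def Z_def[symmetric]
    by (rule cSup_least) (use ne mem in auto)
  moreover have "vex n E a h \<ge> Sa/4 - T/4" unfolding vex_def Z_def[symmetric]
    by (rule cInf_greatest) (use ne mem in auto)
  ultimately show ?thesis unfolding chgap_def E_def h_def by simp
qed



lemma aux_e:
  fixes e K :: real assumes e: "e > 0" and h: "1 + (1/2) * (e * e - 1) \<le> K * e"
  shows "e + inverse e \<le> 2 * K"
proof -
  have 1: "e + inverse e = (e * e + 1) / e" using e by (simp add: field_simps)
  have eq: "2 * (1 + (1/2) * (e * e - 1)) = e * e + 1" by (simp add: field_simps)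
  have "e * e + 1 \<le> 2 * (K * e)" using mult_left_mono[OF h, of 2] eq by simp
  hence "e * e + 1 \<le> (2 * K) * e" by (simp add: mult.assoc)
  hence "(e * e + 1) / e \<le> 2 * K" using e by (simp add: pos_divide_le_eq)
  thus ?thesis using 1 by simp
qed

lemma cosh_bound:
  fixes l :: real assumes "l \<ge> 0"
  shows "exp l + exp (-l) \<le> 2 * exp (l\<^sup>2 / 2)"
proof -
  have H: "-(2*l) * (1/2) + ln (1 + (1/2) * (exp (2*l) - 1)) \<le> (2*l)\<^sup>2 / 8"
    using Hoeffdings_lemma_aux[of "2*l" "1/2"] assms by simp
  have pos: "0 < 1 + (1/2) * (exp (2*l) - 1)" by (simp add: algebra_simps add_pos_pos)
  have s1: "(2*l)\<^sup>2 / 8 = l\<^sup>2 / 2" by (simp add: power2_eq_square)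
  have "ln (1 + (1/2) * (exp (2*l) - 1)) \<le> l\<^sup>2 / 2 + l" using H s1 by linarith
  hence "exp (ln (1 + (1/2) * (exp (2*l) - 1))) \<le> exp (l\<^sup>2 / 2 + l)" by (simp only: exp_le_cancel_iff)
  hence "1 + (1/2) * (exp (2*l) - 1) \<le> exp (l\<^sup>2 / 2 + l)" using pos by (simp only: exp_ln)
  moreover have "exp (2*l) = exp l * exp l" by (simp add: exp_add[symmetric])
  moreover have "exp (l\<^sup>2 / 2 + l) = exp (l\<^sup>2 / 2) * exp l" by (simp add: exp_add)
  ultimately have "1 + (1/2) * (exp l * exp l - 1) \<le> exp (l\<^sup>2 / 2) * exp l" by simp
  from aux_e[OF exp_gt_zero this] show ?thesis by (simp add: exp_minus)
qed

lemma tail: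
  fixes w :: "nat \<times> nat \<Rightarrow> real" and E :: "(nat \<times> nat) set"
  assumes fin: "finite E" and w: "\<forall>e\<in>E. w e = 1 \<or> w e = -1" and l: "l \<ge> 0"
  shows "real (card {a \<in> E \<rightarrow>\<^sub>E {1,-1::real}. t \<le> (\<Sum>e\<in>E. a e * w e)}) * exp (l * t)
     \<le> (2 * exp (l\<^sup>2 / 2)) ^ card E"
proof -
  let ?A = "E \<rightarrow>\<^sub>E {1,-1::real}"
  let ?X = "\<lambda>a. (\<Sum>e\<in>E. a e * w e)"
  let ?F = "{a \<in> ?A. t \<le> ?X a}"
  have finA: "finite ?A" by (rule finite_PiE) (use fin in auto)
  have "real (card ?F) * exp (l * t) = (\<Sum>a\<in>?F. exp (l * t))" by simp
  also have "\<dots> \<le> (\<Sum>a\<in>?F. exp (l * ?X a))"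
    by (rule sum_mono) (use l in \<open>auto intro: mult_left_mono\<close>)
  also have "\<dots> \<le> (\<Sum>a\<in>?A. exp (l * ?X a))"
    by (rule sum_mono2) (use finA in auto)
  also have "\<dots> = (\<Sum>a\<in>?A. \<Prod>e\<in>E. exp (l * w e * a e))"
    by (rule sum.cong[OF refl]) (simp add: sum_distrib_left exp_sum fin mult_ac)
  also have "\<dots> = (\<Prod>e\<in>E. \<Sum>b\<in>{1,-1::real}. exp (l * w e * b))"
    by (rule prod_sum_PiE[symmetric]) (use fin in auto)
  also have "\<dots> \<le> (\<Prod>e\<in>E. 2 * exp (l\<^sup>2 / 2))"
  proof (rule prod_mono)
    fix e assume "e \<in> E"
    hence "w e = 1 \<or> w e = -1" using w by auto
    hence "(\<Sum>b\<in>{1,-1::real}. exp (l * w e * b)) = exp l + exp (-l)" by auto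
    thus "0 \<le> (\<Sum>b\<in>{1,-1::real}. exp (l * w e * b)) \<and> (\<Sum>b\<in>{1,-1::real}. exp (l * w e * b)) \<le> 2 * exp (l\<^sup>2 / 2)"
      using cosh_bound[OF l] by (simp add: add_nonneg_nonneg)
  qed
  also have "\<dots> = (2 * exp (l\<^sup>2 / 2)) ^ card E" by simp
  finally show ?thesis .
qed



lemma prob_bound:
  assumes n: "n \<ge> 2"
  shows "1 - 2^(n+1) * exp (-7 * (real n - 1) / 4) \<le> sign_prob (complete_edges n)
            (\<lambda>a. mcgap n (complete_edges n) a (halfpt n)
                 \<ge> sqrt (real n) / 4 * chgap n (complete_edges n) a (halfpt n))"
proof -
  define E where "E = complete_edges n"
  define A where "A = E \<rightarrow>\<^sub>E {1,-1::real}"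
  define S where "S = {1..n} \<rightarrow>\<^sub>E {1,-1::real}"
  define m where "m = card E"
  define sq where "sq = sqrt (real n)"
  define T where "T = 4 * real m / sq"
  define l where "l = 1 / sq"
  define P where "P = (\<lambda>a. mcgap n E a (halfpt n) \<ge> sqrt (real n) / 4 * chgap n E a (halfpt n))"
  define good where "good = {a\<in>A. \<forall>s\<in>S. \<bar>bil E a s\<bar> \<le> T}"
  define bad where "bad = A - good"
  define w where "w = (\<lambda>(s::nat\<Rightarrow>real) e. s (fst e) * s (snd e))"
  define B where "B = (2 * exp (l\<^sup>2 / 2)) ^ m / exp (l * T)"
  have sqpos: "sq > 0" using n unfolding sq_def by simp
  have sq2: "sq * sq = real n" using n unfolding sq_def by simp
  have finE: "finite E" unfolding E_def by (rule finite_edges)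
  have finA: "finite A" unfolding A_def by (rule finite_PiE) (use finE in auto)
  have finS: "finite S" unfolding S_def by (rule finite_PiE) auto
  have cardA: "card A = 2 ^ m" unfolding A_def m_def using finE by (simp add: card_PiE numeral_2_eq_2)
  have cardS: "card S = 2 ^ n" unfolding S_def by (simp add: card_PiE numeral_2_eq_2)
  have mval: "real m = real n * (real n - 1) / 2" unfolding m_def E_def by (rule card_edges)
  have goodP: "good \<subseteq> {a\<in>A. P a}"
  proof
    fix a assume "a \<in> good"
    hence aA: "a \<in> A" and Bd: "\<forall>s\<in>S. \<bar>bil E a s\<bar> \<le> T" unfolding good_def by auto
    have mg: "mcgap n E a (halfpt n) = real m / 2"
      using mcgap_half[of a n] aA unfolding A_def E_def m_def by simp
    have cg: "chgap n E a (halfpt n) \<le> T / 2"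
      using chgap_bound[of n a T] Bd unfolding S_def E_def by simp
    have "sqrt (real n) / 4 * chgap n E a (halfpt n) \<le> sq / 4 * (T / 2)"
      unfolding sq_def[symmetric] by (rule mult_left_mono[OF cg]) (use sqpos in simp)
    also have "\<dots> = real m / 2" unfolding T_def using sqpos by (simp add: field_simps)
    finally show "a \<in> {a\<in>A. P a}" using aA mg unfolding P_def by simp
  qed
  have wpm: "\<forall>e\<in>E. w s e = 1 \<or> w s e = -1" "\<forall>e\<in>E. - w s e = 1 \<or> - w s e = -1" if "s \<in> S" for s
  proof -
    have "s i = 1 \<or> s i = -1" if "i \<in> {1..n}" for i using \<open>s \<in> S\<close> that unfolding S_def by auto
    hence "w s e = 1 \<or> w s e = -1" if "e \<in> E" for e
    proof -
      have "s (fst e) = 1 \<or> s (fst e) = -1" "s (snd e) = 1 \<or> s (snd e) = -1"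
        using edge_mem[of e n] that \<open>\<And>i. i \<in> {1..n} \<Longrightarrow> s i = 1 \<or> s i = -1\<close> unfolding E_def by auto
      thus ?thesis unfolding w_def by auto
    qed
    thus "\<forall>e\<in>E. w s e = 1 \<or> w s e = -1" "\<forall>e\<in>E. - w s e = 1 \<or> - w s e = -1" by force+
  qed
  define F1 where "F1 = (\<lambda>s. {a\<in>A. T \<le> (\<Sum>e\<in>E. a e * w s e)})"
  define F2 where "F2 = (\<lambda>s. {a\<in>A. T \<le> (\<Sum>e\<in>E. a e * (- w s e))})"
  have lpos: "l \<ge> 0" unfolding l_def using sqpos by simp
  have eF: "real (card (F1 s)) \<le> B" "real (card (F2 s)) \<le> B" if "s \<in> S" for s
  proof -
    have "real (card (F1 s)) * exp (l * T) \<le> (2 * exp (l\<^sup>2 / 2)) ^ m"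
      unfolding F1_def A_def m_def by (rule tail[OF finE wpm(1)[OF that] lpos])
    thus "real (card (F1 s)) \<le> B" unfolding B_def by (simp add: pos_le_divide_eq)
    have "real (card (F2 s)) * exp (l * T) \<le> (2 * exp (l\<^sup>2 / 2)) ^ m"
      unfolding F2_def A_def m_def by (rule tail[OF finE wpm(2)[OF that] lpos])
    thus "real (card (F2 s)) \<le> B" unfolding B_def by (simp add: pos_le_divide_eq)
  qed
  have badsub: "bad \<subseteq> (\<Union>s\<in>S. F1 s \<union> F2 s)"
  proof
    fix a assume "a \<in> bad"
    then obtain s where aA: "a \<in> A" and sS: "s \<in> S" and gt: "\<bar>bil E a s\<bar> > T"
      unfolding bad_def good_def by auto
    have b: "bil E a s = (\<Sum>e\<in>E. a e * w s e)" unfolding bil_alt w_def by (simp add: mult.assoc)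
    have b2: "(\<Sum>e\<in>E. a e * (- w s e)) = - bil E a s" unfolding b by (simp add: sum_negf)
    have "T \<le> bil E a s \<or> T \<le> - bil E a s" using gt by linarith
    thus "a \<in> (\<Union>s\<in>S. F1 s \<union> F2 s)" using aA b b2 unfolding F1_def F2_def by (intro UN_I[OF sS]) auto
  qed
  have "real (card bad) \<le> real (card (\<Union>s\<in>S. F1 s \<union> F2 s))"
  proof (intro of_nat_mono card_mono badsub)
    show "finite (\<Union>s\<in>S. F1 s \<union> F2 s)"
      by (rule finite_subset[OF _ finA]) (auto simp: F1_def F2_def)
  qed
  also have "\<dots> \<le> real (\<Sum>s\<in>S. card (F1 s \<union> F2 s))"
    by (intro of_nat_mono card_UN_le finS)
  also have "\<dots> \<le> (\<Sum>s\<in>S. real (card (F1 s)) + real (card (F2 s)))"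
    unfolding of_nat_sum by (rule sum_mono) (metis card_Un_le of_nat_add of_nat_mono)
  also have "\<dots> \<le> (\<Sum>s\<in>S. 2 * B)"
    by (rule sum_mono) (use eF in fastforce)
  also have "\<dots> = 2 ^ n * 2 * B" using cardS by simp
  finally have cb: "real (card bad) \<le> 2 ^ n * 2 * B" .
  have Bv: "B = 2 ^ m * exp (-7 * (real n - 1) / 4)"
  proof -
    have "(2 * exp (l\<^sup>2 / 2)) ^ m = 2 ^ m * exp (real m * (l\<^sup>2 / 2))"
      by (simp only: power_mult_distrib exp_of_nat_mult)
    hence "B = 2 ^ m * exp (real m * (l\<^sup>2 / 2) - l * T)"
      unfolding B_def by (simp add: exp_diff)
    moreover have "real m * (l\<^sup>2 / 2) - l * T = -7 * (real n - 1) / 4"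
    proof -
      have "l\<^sup>2 = 1 / real n" unfolding l_def using sq2 by (simp add: power2_eq_square)
      moreover have "l * T = 4 * real m / real n" unfolding l_def T_def using sq2 by (simp add: field_simps)
      ultimately have "real m * (l\<^sup>2 / 2) - l * T = real m / (2 * real n) - 4 * real m / real n" by simp
      also have "\<dots> = -7 * (real n - 1) / 4" unfolding mval using n by (simp add: field_simps)
      finally show ?thesis .
    qed
    ultimately show ?thesis by simp
  qed
  have gsub: "good \<subseteq> A" unfolding good_def by auto
  have "real (card good) = real (card A) - real (card bad)"
    unfolding bad_def using card_Diff_subset[OF finite_subset[OF gsub finA] gsub] card_mono[OF finA gsub]
    by simp
  hence cg: "real (card good) \<ge> 2 ^ m - 2 ^ m * (2 ^ (n+1) * exp (-7 * (real n - 1) / 4))"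
    using cb Bv cardA by (simp add: mult_ac)
  have "real (card good) \<le> real (card {a\<in>A. P a})"
    by (intro of_nat_mono card_mono goodP) (use finA in auto)
  hence "2 ^ m - 2 ^ m * (2 ^ (n+1) * exp (-7 * (real n - 1) / 4)) \<le> real (card {a\<in>A. P a})"
    using cg by linarith
  hence "(2 ^ m - 2 ^ m * (2 ^ (n+1) * exp (-7 * (real n - 1) / 4))) / 2 ^ m \<le> real (card {a\<in>A. P a}) / real (card A)"
    using cardA by (simp add: divide_right_mono)
  moreover have "(2 ^ m - 2 ^ m * (2 ^ (n+1) * exp (-7 * (real n - 1) / 4))) / 2 ^ m = 1 - 2 ^ (n+1) * exp (-7 * (real n - 1) / 4)"
    by (simp add: field_simps)
  ultimately show ?thesis unfolding sign_prob_def P_def E_def A_def by simp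
qed

lemma prob_le1:
  assumes "finite E" shows "sign_prob E P \<le> 1"
proof -
  have fin: "finite (E \<rightarrow>\<^sub>E {1,-1::real})" by (rule finite_PiE) (use assms in auto)
  have "card {a \<in> E \<rightarrow>\<^sub>E {1, -1::real}. P a} \<le> card (E \<rightarrow>\<^sub>E {1, -1::real})"
    by (rule card_mono[OF fin]) auto
  thus ?thesis unfolding sign_prob_def by (cases "card (E \<rightarrow>\<^sub>E {1, -1::real}) = 0") (auto simp: divide_le_eq)
qed

lemma eps_eq: "2^(n+1) * exp (-7 * (real n - 1) / 4) = (2 * exp (7/4)) * (2 * exp (-7/4)) ^ n"
proof -
  have "-7 * (real n - 1) / 4 = 7/4 + real n * (-7/4)" by (simp add: field_simps)
  hence "exp (-7 * (real n - 1) / 4) = exp (7/4) * exp (-7/4) ^ n"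
    by (simp only: exp_add exp_of_nat_mult)
  thus ?thesis by (simp add: power_mult_distrib)
qed

lemma eps_lim: "(\<lambda>n. 2^(n+1) * exp (-7 * (real n - 1) / 4)) \<longlonglongrightarrow> 0"
proof -
  have "exp (7/4::real) \<ge> 1 + 7/4" by (rule exp_ge_add_one_self)
  hence "2 * exp (-7/4::real) < 1" by (simp add: exp_minus field_simps)
  hence "(\<lambda>n. (2 * exp (-7/4::real)) ^ n) \<longlonglongrightarrow> 0"
    by (intro LIMSEQ_power_zero) auto
  hence "(\<lambda>n. (2 * exp (7/4)) * (2 * exp (-7/4::real)) ^ n) \<longlonglongrightarrow> (2 * exp (7/4)) * 0"
    by (intro tendsto_mult tendsto_const)
  thus ?thesis unfolding eps_eq by simp
qed

theorem theorem1:
  shows "(\<lambda>n. sign_prob (complete_edges n)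
            (\<lambda>a. mcgap n (complete_edges n) a (halfpt n)
                 \<ge> sqrt (real n) / 4 * chgap n (complete_edges n) a (halfpt n)))
         \<longlonglongrightarrow> 1"
proof (rule tendsto_sandwich[of "\<lambda>n. 1 - 2^(n+1) * exp (-7 * (real n - 1) / 4)" _ _ "\<lambda>n. 1"])
  show "\<forall>\<^sub>F n in sequentially. 1 - 2^(n+1) * exp (-7 * (real n - 1) / 4) \<le> sign_prob (complete_edges n)
            (\<lambda>a. mcgap n (complete_edges n) a (halfpt n)
                 \<ge> sqrt (real n) / 4 * chgap n (complete_edges n) a (halfpt n))"
    by (rule eventually_mono[OF eventually_ge_at_top[of 2]]) (rule prob_bound)
  show "\<forall>\<^sub>F n in sequentially. sign_prob (complete_edges n)
            (\<lambda>a. mcgap n (complete_edges n) a (halfpt n)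
                 \<ge> sqrt (real n) / 4 * chgap n (complete_edges n) a (halfpt n)) \<le> 1"
    by (intro always_eventually allI prob_le1 finite_edges)
  show "(\<lambda>n. 1 - 2^(n+1) * exp (-7 * (real n - 1) / 4)) \<longlonglongrightarrow> 1"
    using tendsto_diff[OF tendsto_const eps_lim, of 1] by simp
  show "(\<lambda>n. 1::real) \<longlonglongrightarrow> 1" by simp
qed

end
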